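(* Fix an integer $k\ge0$. For real numbers $2\le y\le x$, $$\Phi_k(x,y)=\Psi(x,P_k)+O\left(\frac{x(\log x)^{2k}}{y}\right),$$ where the implied constant depends only on $k$.
   Context: $\phi$ is Euler's function, $\phi_0(n)=n$, $\phi_{k+1}(n)=\phi(\phi_k(n))$. $\Phi_k(x,y)=\#\{n\le x:\ p\mid\phi_k(n)\Rightarrow p\le y\}$ ($p$ prime). For a set $P$ of primes, $\Psi(x,P)=\#\{n\le x:\ p\mid n\Rightarrow p\in P\}$. The sets of primes $P_k$ are defined by $P_0=\{p\le y\}$ and $P_{k+1}=\{p\le x \text{ prime}:\ q\mid p-1\Rightarrow q\in P_k\}$. *)

theory Defs
  imports "HOL-Number_Theory.Number_Theory"
begin

definition iter_totient :: "nat \<Rightarrow> nat \<Rightarrow> nat" where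
  "iter_totient k n = (totient ^^ k) n"

definition Phi_count :: "nat \<Rightarrow> real \<Rightarrow> real \<Rightarrow> nat" where
  "Phi_count k x y = card {n::nat. 1 \<le> n \<and> real n \<le> x \<and>
      (\<forall>p. prime p \<and> p dvd iter_totient k n \<longrightarrow> real p \<le> y)}"

definition Psi_count :: "real \<Rightarrow> nat set \<Rightarrow> nat" where
  "Psi_count x P = card {n::nat. 1 \<le> n \<and> real n \<le> x \<and>
      (\<forall>p. prime p \<and> p dvd n \<longrightarrow> p \<in> P)}"

fun P_set :: "real \<Rightarrow> real \<Rightarrow> nat \<Rightarrow> nat set" where
  "P_set x y 0 = {p. prime p \<and> real p \<le> y}"
| "P_set x y (Suc k) = {p. prime p \<and> real p \<le> x \<and>
      (\<forall>q. prime q \<and> q dvd (p - 1) \<longrightarrow> q \<in> P_set x y k)}"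

end

theory Submission
  imports Defs
begin

lemma decomp:
  fixes m :: nat assumes "m > 1"
  obtains p a r where "prime p" "a \<ge> 1" "m = p^a * r" "\<not> p dvd r" "r \<ge> 1" "r < m"
    "totient m = p^(a-1)*(p-1) * totient r"
proof -
  obtain p where p: "prime p" "p dvd m" using assms prime_factor_nat[of m] by auto
  define a where "a = multiplicity p m"
  obtain r where r: "m = p^a * r" "\<not> p dvd r" using multiplicity_decompose'[of m p] a_def assms p(1)
    by (metis not_prime_unit not_one_less_zero gr_implies_not0)
  have "m \<noteq> 0" "\<not> is_unit p" using assms p(1) not_prime_unit by auto
  then have "multiplicity p m > 0" using multiplicity_gt_zero_iff[of m p] p(2) by blast
  then have a1: "a \<ge> 1" using a_def by simp
  have r1: "r \<ge> 1" using r assms by (metis less_one mult_0_right not_less_zero linorder_not_less)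
  have pa: "p^a > 1" using a1 p prime_gt_1_nat by (metis One_nat_def less_le_trans power_increasing_iff power_one_right)
  have rm: "r < m" using r(1) pa r1 by simp
  have cop: "coprime (p^a) r" using r(2) p by (simp add: prime_imp_coprime coprime_power_left_iff)
  have "totient m = totient (p^a) * totient r" using r(1) cop totient_mult_coprime by simp
  also have "totient (p^a) = p^(a-1)*(p-1)" using totient_prime_power p a1 by simp
  finally show ?thesis using that p a1 r r1 rm by blast
qed

lemma dvd_A:
  fixes p q a :: nat
  assumes "prime p" "prime q" "a \<ge> 1" "q dvd p^(a-1)*(p-1)"
  shows "(q = p \<and> p*p dvd p^a) \<or> q dvd p-1"
proof (cases "q dvd p - 1")
  case False
  then have "q dvd p^(a-1)" using assms prime_dvd_mult_iff by blast
  then have "q dvd p" using assms prime_dvd_power by blast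
  then have qp: "q = p" using assms primes_dvd_imp_eq by blast
  then have "p dvd p^(a-1)" using \<open>q dvd p^(a-1)\<close> by simp
  then have "p * p dvd p * p^(a-1)" by simp
  also have "p * p^(a-1) = p^a" using assms(3) by (metis Suc_diff_1 less_le_trans zero_less_one power_Suc)
  finally show ?thesis using qp by simp
qed simp

lemma prime_not_dvd_pred:
  fixes p :: nat assumes "prime p" shows "\<not> p dvd p - 1"
proof
  assume "p dvd p - 1"
  moreover have "p - 1 > 0" using prime_gt_1_nat[OF assms] by simp
  ultimately have "p \<le> p - 1" by (simp add: dvd_imp_le)
  then show False using prime_gt_1_nat[OF assms] by simp
qed

lemma W1:
  fixes q m :: nat
  assumes "prime q" "m \<ge> 1" "q dvd totient m"
  shows "q*q dvd m \<or> (\<exists>p. prime p \<and> p dvd m \<and> q dvd p - 1)"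
  using assms(2,3)
proof (induction m rule: less_induct)
  case (less m)
  show ?case
  proof (cases "m = 1")
    case True
    then show ?thesis using less assms(1) by (simp add: prime_gt_1_nat)
  next
    case False
    then have "m > 1" using less by simp
    then obtain p a r where d: "prime p" "a \<ge> 1" "m = p^a * r" "\<not> p dvd r" "r \<ge> 1" "r < m"
      "totient m = p^(a-1)*(p-1) * totient r" by (rule decomp)
    have pm: "p dvd m" using d by (simp add: dvd_power)
    have rm: "r dvd m" using d by simp
    have pam: "p^a dvd m" using d by simp
    from less(3) d(7) have "q dvd p^(a-1)*(p-1) \<or> q dvd totient r"
      using assms(1) prime_dvd_mult_iff by metis
    then show ?thesis
    proof
      assume "q dvd p^(a-1)*(p-1)"
      then have "(q = p \<and> p*p dvd p^a) \<or> q dvd p-1" using dvd_A d assms by blast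
      then show ?thesis using pam pm d(1) dvd_trans by blast
    next
      assume "q dvd totient r"
      then have "q*q dvd r \<or> (\<exists>p. prime p \<and> p dvd r \<and> q dvd p - 1)" using less d by blast
      then show ?thesis using rm dvd_trans by blast
    qed
  qed
qed

lemma split_pair:
  fixes q q' A B :: nat
  assumes "prime q" "prime q'" "q*q' dvd A*B"
  shows "q*q' dvd A \<or> q*q' dvd B \<or> (q dvd A \<and> q' dvd B) \<or> (q' dvd A \<and> q dvd B)"
proof -
  have "q dvd A*B" using assms(3) dvd_mult_left by blast
  then have "q dvd A \<or> q dvd B" using assms(1) prime_dvd_mult_iff by blast
  then show ?thesis
  proof
    assume "q dvd A"
    then obtain A' where A': "A = q*A'" by blast
    then have "q*q' dvd q*(A'*B)" using assms(3) by (simp add: mult.assoc)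
    then have "q' dvd A'*B" using assms(1) by (simp add: prime_gt_0_nat)
    then have "q' dvd A' \<or> q' dvd B" using assms(2) prime_dvd_mult_iff by blast
    then show ?thesis using A' \<open>q dvd A\<close> by auto
  next
    assume "q dvd B"
    then obtain B' where B': "B = q*B'" by blast
    then have "q*q' dvd q*(A*B')" using assms(3) by (simp add: algebra_simps)
    then have "q' dvd A*B'" using assms(1) by (simp add: prime_gt_0_nat)
    then have "q' dvd A \<or> q' dvd B'" using assms(2) prime_dvd_mult_iff by blast
    then show ?thesis using B' \<open>q dvd B\<close> by (auto simp: mult.commute)
  qed
qed

definition Wit2 :: "nat \<Rightarrow> nat \<Rightarrow> nat \<Rightarrow> bool" where
  "Wit2 q q' m \<longleftrightarrow> q*q' dvd m \<or> (\<exists>p'. prime p' \<and> q' dvd p'-1 \<and> q*p' dvd m)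
     \<or> (\<exists>p. prime p \<and> q dvd p-1 \<and> p*q' dvd m) \<or> (\<exists>p. prime p \<and> q*q' dvd p-1 \<and> p dvd m)
     \<or> (\<exists>p p'. prime p \<and> prime p' \<and> q dvd p-1 \<and> q' dvd p'-1 \<and> p*p' dvd m)"

lemma Wit2_trans: "Wit2 q q' r \<Longrightarrow> r dvd m \<Longrightarrow> Wit2 q q' m"
  unfolding Wit2_def using dvd_trans by meson

lemma dvdA_pair:
  fixes p q q' a :: nat
  assumes "prime p" "prime q" "prime q'" "a \<ge> 1" "q*q' dvd p^(a-1)*(p-1)"
  shows "Wit2 q q' (p^a)"
proof -
  have pa: "p * p^(a-1) = p^a" using assms(4) by (metis Suc_diff_1 less_le_trans zero_less_one power_Suc)
  have cop1: "coprime p (p-1)" using prime_not_dvd_pred[OF assms(1)] assms(1) prime_imp_coprime by blast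
  have qA: "q dvd p^(a-1)*(p-1)" "q' dvd p^(a-1)*(p-1)" using assms(5) dvd_mult_left dvd_mult_right by blast+
  show ?thesis
  proof (cases "q = p")
    case qp: True
    have "p dvd p^(a-1)" using qA(1) qp cop1 by (metis coprime_dvd_mult_left_iff dvd_refl)
    then have ppa: "p*p dvd p^a" using pa by (metis mult_dvd_mono dvd_refl)
    show ?thesis
    proof (cases "q' = p")
      case True
      then show ?thesis using qp ppa unfolding Wit2_def by simp
    next
      case False
      then have "coprime q' p" using assms primes_coprime by blast
      then have "coprime q' (p^(a-1))" by simp
      then have "q' dvd p - 1" using qA(2) coprime_dvd_mult_right_iff by blast
      then show ?thesis using qp ppa assms(1) unfolding Wit2_def by blast
    qed
  next
    case qnp: False
    then have "coprime q p" using assms primes_coprime by blast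
    then have "coprime q (p^(a-1))" by simp
    then have qd: "q dvd p - 1" using qA(1) coprime_dvd_mult_right_iff by blast
    show ?thesis
    proof (cases "q' = p")
      case True
      have "p dvd p^(a-1)" using qA(2) True cop1 by (metis coprime_dvd_mult_left_iff dvd_refl)
      then have ppa: "p*p dvd p^a" using pa by (metis mult_dvd_mono dvd_refl)
      then show ?thesis using True qd assms(1) unfolding Wit2_def by blast
    next
      case False
      then have "coprime q' p" using assms primes_coprime by blast
      then have "coprime (q*q') (p^(a-1))" using \<open>coprime q (p^(a-1))\<close> by simp
      then have "q*q' dvd p - 1" using assms(5) coprime_dvd_mult_right_iff by blast
      moreover have "p dvd p^a" using assms(4) by (simp add: dvd_power)
      ultimately show ?thesis using assms(1) unfolding Wit2_def by blast
    qed
  qed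
qed

lemma W2:
  fixes q q' m :: nat
  assumes "prime q" "prime q'" "m \<ge> 1" "q*q' dvd totient m"
  shows "Wit2 q q' m"
  using assms(3,4)
proof (induction m rule: less_induct)
  case (less m)
  show ?case
  proof (cases "m = 1")
    case True
    then show ?thesis using less assms(1,2) by (simp add: prime_gt_1_nat)
  next
    case False
    then have "m > 1" using less by simp
    then obtain p a r where d: "prime p" "a \<ge> 1" "m = p^a * r" "\<not> p dvd r" "r \<ge> 1" "r < m"
      "totient m = p^(a-1)*(p-1) * totient r" by (rule decomp)
    have pm: "p dvd m" using d by (simp add: dvd_power)
    have rm: "r dvd m" using d by simp
    have pam: "p^a dvd m" using d by simp
    have pa: "p dvd p^a" using d by (simp add: dvd_power)
    from split_pair[OF assms(1,2), of "p^(a-1)*(p-1)" "totient r"] less(3) d(7)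
    consider "q*q' dvd p^(a-1)*(p-1)" | "q*q' dvd totient r"
      | "q dvd p^(a-1)*(p-1)" "q' dvd totient r" | "q' dvd p^(a-1)*(p-1)" "q dvd totient r"
      by metis
    then show ?thesis
    proof cases
      case 1
      then show ?thesis using dvdA_pair[OF d(1) assms(1,2) d(2)] Wit2_trans pam by blast
    next
      case 2
      then show ?thesis using less d Wit2_trans rm by blast
    next
      case 3
      have A: "(q = p \<and> p*p dvd p^a) \<or> q dvd p-1" using dvd_A d assms 3 by blast
      have B: "q'*q' dvd r \<or> (\<exists>p. prime p \<and> p dvd r \<and> q' dvd p - 1)" using W1 assms d 3 by blast
      from A B show ?thesis
      proof (elim disjE exE conjE)
        assume "q = p" "q'*q' dvd r"
        then have "q*q' dvd p^a * r" using pa by (meson dvd_mult_left mult_dvd_mono)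
        then show ?thesis using d unfolding Wit2_def by simp
      next
        fix p' assume "q = p" "prime p'" "p' dvd r" "q' dvd p' - 1"
        then have "q*p' dvd p^a * r" using pa by (simp add: mult_dvd_mono)
        then show ?thesis using d \<open>prime p'\<close> \<open>q' dvd p' - 1\<close> unfolding Wit2_def by blast
      next
        assume "q dvd p - 1" "q'*q' dvd r"
        then have "p*q' dvd p^a * r" using pa by (meson dvd_mult_left mult_dvd_mono)
        then show ?thesis using d \<open>q dvd p - 1\<close> unfolding Wit2_def by blast
      next
        fix p' assume "q dvd p - 1" "prime p'" "p' dvd r" "q' dvd p' - 1"
        then have "p*p' dvd p^a * r" using pa by (simp add: mult_dvd_mono)
        then show ?thesis using d \<open>prime p'\<close> \<open>q' dvd p' - 1\<close> \<open>q dvd p - 1\<close> unfolding Wit2_def by blast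
      qed
    next
      case 4
      have A: "(q' = p \<and> p*p dvd p^a) \<or> q' dvd p-1" using dvd_A d assms 4 by blast
      have B: "q*q dvd r \<or> (\<exists>p. prime p \<and> p dvd r \<and> q dvd p - 1)" using W1 assms d 4 by blast
      from A B show ?thesis
      proof (elim disjE exE conjE)
        assume "q' = p" "q*q dvd r"
        then have "q'*q dvd p^a * r" using pa by (meson dvd_mult_left mult_dvd_mono)
        then show ?thesis using d unfolding Wit2_def by (simp add: mult.commute)
      next
        fix p' assume "q' = p" "prime p'" "p' dvd r" "q dvd p' - 1"
        then have "p'*q' dvd p^a * r" using pa by (simp add: mult_dvd_mono mult.commute)
        then show ?thesis using d \<open>prime p'\<close> \<open>q dvd p' - 1\<close> unfolding Wit2_def by blast
      next
        assume "q' dvd p - 1" "q*q dvd r"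
        then have "q*p dvd p^a * r" using pa by (metis dvd_mult_left mult_dvd_mono mult.commute)
        then show ?thesis using d \<open>q' dvd p - 1\<close> unfolding Wit2_def by blast
      next
        fix p' assume "q' dvd p - 1" "prime p'" "p' dvd r" "q dvd p' - 1"
        then have "p'*p dvd p^a * r" using pa by (metis mult_dvd_mono mult.commute)
        then show ?thesis using d \<open>prime p'\<close> \<open>q dvd p' - 1\<close> \<open>q' dvd p - 1\<close> unfolding Wit2_def by blast
      qed
    qed
  qed
qed

lemma iter_totient_Suc: "iter_totient (Suc k) n = iter_totient k (totient n)"
  unfolding iter_totient_def by (simp only: funpow_Suc_right o_apply)

lemma iter_totient_0[simp]: "iter_totient 0 n = n"
  unfolding iter_totient_def by simp

lemma iter_bounds: "n \<ge> 1 \<Longrightarrow> iter_totient j n \<ge> 1 \<and> iter_totient j n \<le> n"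
proof (induction j arbitrary: n)
  case 0 then show ?case by simp
next
  case (Suc j)
  have "totient n \<ge> 1" "totient n \<le> n" using Suc.prems totient_le by (auto simp: Suc_le_eq)
  then show ?case using Suc.IH[of "totient n"] iter_totient_Suc by (metis le_trans)
qed

lemma pred_dvd_totient: "prime p \<Longrightarrow> p dvd m \<Longrightarrow> p - 1 dvd totient m"
  using totient_dvd totient_prime by metis

lemma small_in_P:
  assumes "y \<le> x" "prime q" "real q \<le> y"
  shows "q \<in> P_set x y k"
  using assms(2,3)
proof (induction k arbitrary: q)
  case 0 then show ?case by simp
next
  case (Suc k)
  have "\<forall>r. prime r \<and> r dvd q - 1 \<longrightarrow> r \<in> P_set x y k"
  proof (intro allI impI)
    fix r assume r: "prime r \<and> r dvd q - 1"
    have "q - 1 > 0" using prime_gt_1_nat[OF Suc.prems(1)] by simp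
    then have "r \<le> q - 1" using r dvd_imp_le by blast
    then have "real r \<le> y" using Suc.prems(2) prime_gt_1_nat[OF Suc.prems(1)] by linarith
    then show "r \<in> P_set x y k" using Suc.IH r by blast
  qed
  then show ?case using Suc.prems assms(1) by simp
qed

lemma part_a:
  "n \<ge> 1 \<Longrightarrow> real n \<le> x \<Longrightarrow> (\<forall>p. prime p \<and> p dvd iter_totient j n \<longrightarrow> real p \<le> y)
    \<Longrightarrow> (\<forall>p. prime p \<and> p dvd n \<longrightarrow> p \<in> P_set x y j)"
proof (induction j arbitrary: n)
  case 0 then show ?case by simp
next
  case (Suc j)
  have t1: "totient n \<ge> 1" "totient n \<le> n" using Suc.prems totient_le by (auto simp: Suc_le_eq)
  have Q: "\<forall>p. prime p \<and> p dvd totient n \<longrightarrow> p \<in> P_set x y j"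
    using Suc.IH[of "totient n"] t1 Suc.prems iter_totient_Suc by (metis le_trans of_nat_le_iff order_trans)
  show ?case
  proof (intro allI impI)
    fix p assume p: "prime p \<and> p dvd n"
    have "p \<le> n" using p Suc.prems(1) dvd_imp_le by auto
    then have "real p \<le> x" using Suc.prems(2) by linarith
    moreover have "\<forall>q. prime q \<and> q dvd p - 1 \<longrightarrow> q \<in> P_set x y j"
      using Q pred_dvd_totient p dvd_trans by blast
    ultimately show "p \<in> P_set x y (Suc j)" using p by simp
  qed
qed

lemma part_b:
  assumes "y \<le> x"
  shows "n \<ge> 1 \<Longrightarrow> (\<forall>p. prime p \<and> p dvd n \<longrightarrow> p \<in> P_set x y k) \<Longrightarrow>
    (\<forall>i<k. \<forall>q. prime q \<and> q*q dvd iter_totient i n \<longrightarrow> real q \<le> y) \<Longrightarrow>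
    (\<forall>p. prime p \<and> p dvd iter_totient k n \<longrightarrow> real p \<le> y)"
proof (induction k arbitrary: n)
  case 0 then show ?case by simp
next
  case (Suc k)
  have t1: "totient n \<ge> 1" using Suc.prems by (auto simp: Suc_le_eq)
  have Q: "\<forall>q. prime q \<and> q dvd totient n \<longrightarrow> q \<in> P_set x y k"
  proof (intro allI impI)
    fix q assume q: "prime q \<and> q dvd totient n"
    then have "q*q dvd n \<or> (\<exists>p. prime p \<and> p dvd n \<and> q dvd p - 1)" using W1 Suc.prems(1) by blast
    then show "q \<in> P_set x y k"
    proof
      assume "q*q dvd n"
      then have "real q \<le> y" using Suc.prems(3) q by (metis zero_less_Suc iter_totient_0)
      then show ?thesis using small_in_P assms q by blast
    next
      assume "\<exists>p. prime p \<and> p dvd n \<and> q dvd p - 1"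
      then obtain p where "prime p" "p dvd n" "q dvd p - 1" by blast
      then have "p \<in> P_set x y (Suc k)" using Suc.prems(2) by blast
      then show ?thesis using q \<open>q dvd p - 1\<close> by simp
    qed
  qed
  have bad: "\<forall>i<k. \<forall>q. prime q \<and> q*q dvd iter_totient i (totient n) \<longrightarrow> real q \<le> y"
    using Suc.prems(3) iter_totient_Suc by (metis Suc_mono)
  show ?case using Suc.IH[OF t1 Q bad] iter_totient_Suc by metis
qed

definition Hn :: "nat \<Rightarrow> real" where "Hn N = (\<Sum>k\<in>{1..N}. 1 / real k)"

lemma Hn_ge1: "N \<ge> 1 \<Longrightarrow> Hn N \<ge> 1"
proof -
  assume "N \<ge> 1"
  then have "(\<Sum>k\<in>{1..1}. 1 / real k) \<le> (\<Sum>k\<in>{1..N}. 1 / real k)"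
    by (intro sum_mono2) auto
  then show ?thesis unfolding Hn_def by simp
qed

lemma base_count:
  fixes N d :: nat assumes "d \<ge> 1"
  shows "real (card {n\<in>{1..N}. d dvd n}) \<le> real N / real d"
proof -
  have "{n\<in>{1..N}. d dvd n} \<subseteq> (\<lambda>k. d*k) ` {1..N div d}"
  proof
    fix n assume n: "n \<in> {n\<in>{1..N}. d dvd n}"
    then obtain k where k: "n = d*k" by blast
    have "k \<ge> 1" using n k by (cases k) auto
    moreover have "k \<le> N div d" using div_le_mono[of "d*k" N d] n k assms by simp
    ultimately show "n \<in> (\<lambda>k. d*k) ` {1..N div d}" using k by auto
  qed
  then have "card {n\<in>{1..N}. d dvd n} \<le> card ((\<lambda>k. d*k) ` {1..N div d})"
    by (intro card_mono) auto
  also have "\<dots> \<le> N div d" using card_image_le[of "{1..N div d}" "\<lambda>k. d*k"] by simp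
  finally have "real (card {n\<in>{1..N}. d dvd n}) \<le> real (N div d)" by linarith
  also have "\<dots> \<le> real N / real d" by (rule of_nat_div_le_of_nat)
  finally show ?thesis .
qed

definition Pr :: "nat \<Rightarrow> nat \<Rightarrow> nat set" where
  "Pr N d = {p\<in>{1..N}. prime p \<and> d dvd p - 1}"

lemma finite_Pr[simp]: "finite (Pr N d)" unfolding Pr_def by simp

lemma sum_Pr:
  fixes N d :: nat assumes "d \<ge> 1"
  shows "(\<Sum>p\<in>Pr N d. 1 / real p) \<le> Hn N / real d"
proof -
  define g where "g p = (p - 1) div d" for p
  have gp: "p - 1 = d * g p \<and> g p \<ge> 1 \<and> g p \<le> N \<and> p \<ge> 1" if "p \<in> Pr N d" for p
  proof -
    have p: "prime p" "d dvd p - 1" "p \<le> N" using that unfolding Pr_def by auto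
    have e: "p - 1 = d * g p" using p(2) unfolding g_def by simp
    have "p - 1 > 0" using prime_gt_1_nat[OF p(1)] by simp
    then have "g p \<ge> 1" using e by (cases "g p") auto
    moreover have "g p \<le> d * g p" using assms by simp
    moreover have "p \<ge> 1" using prime_gt_1_nat[OF p(1)] by simp
    ultimately show ?thesis using e p(3) by linarith
  qed
  have inj: "inj_on g (Pr N d)"
  proof (rule inj_onI)
    fix a b assume "a \<in> Pr N d" "b \<in> Pr N d" "g a = g b"
    then have "a - 1 = b - 1" "a \<ge> 1" "b \<ge> 1" using gp[of a] gp[of b] by auto
    then show "a = b" by linarith
  qed
  have "(\<Sum>p\<in>Pr N d. 1 / real p) \<le> (\<Sum>p\<in>Pr N d. (1 / real d) * (1 / real (g p)))"
  proof (rule sum_mono)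
    fix p assume "p \<in> Pr N d"
    then have h: "p - 1 = d * g p" "g p \<ge> 1" "p \<ge> 1" using gp by auto
    then have "real p \<ge> real d * real (g p)" by (metis diff_le_self of_nat_le_iff of_nat_mult)
    moreover have "real d * real (g p) > 0" using h assms by simp
    ultimately show "1 / real p \<le> (1 / real d) * (1 / real (g p))"
      by (simp add: divide_simps)
  qed
  also have "\<dots> = (1 / real d) * (\<Sum>p\<in>Pr N d. 1 / real (g p))" by (simp add: sum_distrib_left)
  also have "(\<Sum>p\<in>Pr N d. 1 / real (g p)) = (\<Sum>k\<in>g ` Pr N d. 1 / real k)"
    using sum.reindex[OF inj, of "\<lambda>k. 1 / real k"] by simp
  also have "\<dots> \<le> Hn N" unfolding Hn_def
    by (rule sum_mono2) (use gp in auto)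
  finally show ?thesis using assms by (simp add: divide_simps mult_left_mono)
qed

lemma iter_totient_Suc': "iter_totient (Suc k) n = totient (iter_totient k n)"
  unfolding iter_totient_def by simp

definition Aset :: "nat \<Rightarrow> nat \<Rightarrow> nat \<Rightarrow> nat set" where
  "Aset N j d = {n\<in>{1..N}. d dvd iter_totient j n}"

lemma finite_Aset[simp]: "finite (Aset N j d)" unfolding Aset_def by simp

lemma card_UN_real:
  assumes "finite S" "\<And>s. s \<in> S \<Longrightarrow> finite (f s)"
  shows "real (card (\<Union>s\<in>S. f s)) \<le> (\<Sum>s\<in>S. real (card (f s)))"
proof -
  have "card (\<Union>s\<in>S. f s) \<le> (\<Sum>s\<in>S. card (f s))" using card_UN_le[OF assms(1)] by blast
  then show ?thesis by (metis of_nat_le_iff of_nat_sum)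
qed

lemma card_Un_real:
  assumes "finite A" "finite B"
  shows "real (card (A \<union> B)) \<le> real (card A) + real (card B)"
  using card_Un_le[of A B] by linarith

lemma mem_Aset_dvd:
  assumes "n \<in> {1..N}" "e dvd iter_totient j n"
  shows "n \<in> Aset N j e"
  using assms unfolding Aset_def by simp

lemma dvd_iter_le:
  assumes "n \<in> {1..N}" "e dvd iter_totient j n"
  shows "e \<le> N" "e \<ge> 1"
proof -
  have "iter_totient j n \<ge> 1" "iter_totient j n \<le> n" using iter_bounds[of n j] assms(1) by auto
  then have "e \<le> iter_totient j n" "e \<noteq> 0" using assms(2) dvd_imp_le by auto
  then show "e \<le> N" "e \<ge> 1" using assms(1) \<open>iter_totient j n \<le> n\<close> by auto
qed

lemma Pr_mem: "prime p \<Longrightarrow> p \<le> N \<Longrightarrow> d dvd p - 1 \<Longrightarrow> p \<in> Pr N d"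
  unfolding Pr_def using prime_gt_1_nat[of p] by auto

lemma Pr_prime: "p \<in> Pr N d \<Longrightarrow> prime p" unfolding Pr_def by auto

lemma Pr_pos: "p \<in> Pr N d \<Longrightarrow> real p > 0" using Pr_prime prime_gt_0_nat by force

lemma step_prime:
  fixes N j q :: nat and c :: real
  assumes N1: "N \<ge> 1" and c0: "c \<ge> 0"
    and IH1: "\<forall>q. prime q \<longrightarrow> real (card (Aset N j q)) \<le> c / real q"
    and IH2: "\<forall>q q'. prime q \<longrightarrow> prime q' \<longrightarrow> real (card (Aset N j (q*q'))) \<le> c / (real q * real q')"
    and q: "prime q"
  shows "real (card (Aset N (Suc j) q)) \<le> 5 * Hn N ^ 2 * c / real q"
proof -
  define H where "H = Hn N"
  have H1: "H \<ge> 1" using Hn_ge1[OF N1] H_def by simp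
  have qpos: "real q \<ge> 1" using prime_gt_0_nat[OF q] by linarith
  have sub: "Aset N (Suc j) q \<subseteq> Aset N j (q*q) \<union> (\<Union>p\<in>Pr N q. Aset N j p)"
  proof
    fix n assume "n \<in> Aset N (Suc j) q"
    then have n: "n \<in> {1..N}" "q dvd totient (iter_totient j n)"
      unfolding Aset_def by (auto simp: iter_totient_Suc')
    have m1: "iter_totient j n \<ge> 1" using iter_bounds[of n j] n by auto
    from W1[OF q m1 n(2)] show "n \<in> Aset N j (q*q) \<union> (\<Union>p\<in>Pr N q. Aset N j p)"
    proof
      assume "q * q dvd iter_totient j n"
      then show ?thesis using mem_Aset_dvd n by blast
    next
      assume "\<exists>p. prime p \<and> p dvd iter_totient j n \<and> q dvd p - 1"
      then obtain p where p: "prime p" "p dvd iter_totient j n" "q dvd p - 1" by blast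
      then have "p \<in> Pr N q" using Pr_mem dvd_iter_le(1)[OF n(1) p(2)] by blast
      then show ?thesis using mem_Aset_dvd[OF n(1) p(2)] by blast
    qed
  qed
  have "real (card (Aset N (Suc j) q)) \<le> real (card (Aset N j (q*q) \<union> (\<Union>p\<in>Pr N q. Aset N j p)))"
    using card_mono[OF _ sub] by simp
  also have "\<dots> \<le> real (card (Aset N j (q*q))) + real (card (\<Union>p\<in>Pr N q. Aset N j p))"
    by (rule card_Un_real) auto
  also have "\<dots> \<le> c / (real q * real q) + (\<Sum>p\<in>Pr N q. c / real p)"
  proof (rule add_mono)
    show "real (card (Aset N j (q*q))) \<le> c / (real q * real q)" using IH2 q by simp
    have "real (card (\<Union>p\<in>Pr N q. Aset N j p)) \<le> (\<Sum>p\<in>Pr N q. real (card (Aset N j p)))"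
      by (rule card_UN_real) auto
    also have "\<dots> \<le> (\<Sum>p\<in>Pr N q. c / real p)"
      by (rule sum_mono) (use IH1 Pr_prime in blast)
    finally show "real (card (\<Union>p\<in>Pr N q. Aset N j p)) \<le> (\<Sum>p\<in>Pr N q. c / real p)" .
  qed
  also have "(\<Sum>p\<in>Pr N q. c / real p) = c * (\<Sum>p\<in>Pr N q. 1 / real p)"
    by (simp add: sum_distrib_left)
  also have "\<dots> \<le> c * (H / real q)"
    using sum_Pr[of q N] qpos c0 H_def by (intro mult_left_mono) auto
  also have "c / (real q * real q) \<le> c * H / real q"
  proof -
    have "c \<le> c * real q" using qpos c0 by (metis mult_left_mono mult.right_neutral)
    then have "c / (real q * real q) \<le> c / real q" using qpos c0
      by (simp add: divide_simps)
    also have "\<dots> \<le> c * H / real q" using H1 c0 qpos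
      by (intro divide_right_mono) (auto simp: mult_left_mono[of 1 H c, simplified])
    finally show ?thesis .
  qed
  finally have "real (card (Aset N (Suc j) q)) \<le> 2 * (H * c) / real q" by simp
  then have "real (card (Aset N (Suc j) q)) \<le> 2 * (c * H) / real q" by (simp only: mult.commute)
  also have "\<dots> \<le> 5 * H^2 * c / real q"
  proof -
    have "H * 1 \<le> H * H" using H1 by (intro mult_left_mono) auto
    then have "c * H \<le> c * (H * H)" using c0 by (intro mult_left_mono) auto
    moreover have "c * H \<ge> 0" using c0 H1 by simp
    ultimately have "2 * (c * H) \<le> 5 * (c * (H * H))" by linarith
    then have "2 * (c * H) \<le> 5 * H^2 * c" by (simp add: power2_eq_square mult_ac)
    then show ?thesis using qpos by (simp add: divide_right_mono)
  qed
  finally show ?thesis using H_def by simp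
qed

lemma step_pair:
  fixes N j q q' :: nat and c :: real
  assumes N1: "N \<ge> 1" and c0: "c \<ge> 0"
    and IH1: "\<forall>q. prime q \<longrightarrow> real (card (Aset N j q)) \<le> c / real q"
    and IH2: "\<forall>q q'. prime q \<longrightarrow> prime q' \<longrightarrow> real (card (Aset N j (q*q'))) \<le> c / (real q * real q')"
    and q: "prime q" and q': "prime q'"
  shows "real (card (Aset N (Suc j) (q*q'))) \<le> 5 * Hn N ^ 2 * c / (real q * real q')"
proof -
  define H where "H = Hn N"
  have H1: "H \<ge> 1" using Hn_ge1[OF N1] H_def by simp
  have qpos: "real q \<ge> 1" using prime_gt_0_nat[OF q] by linarith
  have q'pos: "real q' \<ge> 1" using prime_gt_0_nat[OF q'] by linarith
  define U2 where "U2 = (\<Union>p'\<in>Pr N q'. Aset N j (q*p'))"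
  define U3 where "U3 = (\<Union>p\<in>Pr N q. Aset N j (p*q'))"
  define U4 where "U4 = (\<Union>p\<in>Pr N (q*q'). Aset N j p)"
  define U5 where "U5 = (\<Union>(p,p')\<in>Pr N q \<times> Pr N q'. Aset N j (p*p'))"
  have sub: "Aset N (Suc j) (q*q') \<subseteq> Aset N j (q*q') \<union> U2 \<union> U3 \<union> U4 \<union> U5"
  proof
    fix n assume "n \<in> Aset N (Suc j) (q*q')"
    then have n: "n \<in> {1..N}" "q*q' dvd totient (iter_totient j n)"
      unfolding Aset_def by (auto simp: iter_totient_Suc')
    have m1: "iter_totient j n \<ge> 1" using iter_bounds[of n j] n by auto
    have "Wit2 q q' (iter_totient j n)" using W2[OF q q' m1 n(2)] .
    then consider "q*q' dvd iter_totient j n"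
      | p' where "prime p'" "q' dvd p'-1" "q*p' dvd iter_totient j n"
      | p where "prime p" "q dvd p-1" "p*q' dvd iter_totient j n"
      | p where "prime p" "q*q' dvd p-1" "p dvd iter_totient j n"
      | p p' where "prime p" "prime p'" "q dvd p-1" "q' dvd p'-1" "p*p' dvd iter_totient j n"
      unfolding Wit2_def by blast
    then show "n \<in> Aset N j (q*q') \<union> U2 \<union> U3 \<union> U4 \<union> U5"
    proof cases
      case 1 then show ?thesis using mem_Aset_dvd[OF n(1)] by blast
    next
      case (2 p')
      have "p' dvd iter_totient j n" using 2(3) dvd_mult_right by blast
      then have "p' \<in> Pr N q'" using Pr_mem 2 dvd_iter_le(1)[OF n(1)] by blast
      then show ?thesis using mem_Aset_dvd[OF n(1) 2(3)] unfolding U2_def by blast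
    next
      case (3 p)
      have "p dvd iter_totient j n" using 3(3) dvd_mult_left by blast
      then have "p \<in> Pr N q" using Pr_mem 3 dvd_iter_le(1)[OF n(1)] by blast
      then show ?thesis using mem_Aset_dvd[OF n(1) 3(3)] unfolding U3_def by blast
    next
      case (4 p)
      then have "p \<in> Pr N (q*q')" using Pr_mem dvd_iter_le(1)[OF n(1)] by blast
      then show ?thesis using mem_Aset_dvd[OF n(1) 4(3)] unfolding U4_def by blast
    next
      case (5 p p')
      have "p dvd iter_totient j n" "p' dvd iter_totient j n" using 5(5) dvd_mult_left dvd_mult_right by blast+
      then have "p \<in> Pr N q" "p' \<in> Pr N q'" using Pr_mem 5 dvd_iter_le(1)[OF n(1)] by blast+
      then show ?thesis using mem_Aset_dvd[OF n(1) 5(5)] unfolding U5_def by blast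
    qed
  qed
  have fin: "finite U2" "finite U3" "finite U4" "finite U5" unfolding U2_def U3_def U4_def U5_def by auto
  have "real (card (Aset N (Suc j) (q*q'))) \<le> real (card (Aset N j (q*q') \<union> U2 \<union> U3 \<union> U4 \<union> U5))"
    using card_mono[OF _ sub] fin by simp
  also have "\<dots> \<le> real (card (Aset N j (q*q'))) + real (card U2) + real (card U3) + real (card U4) + real (card U5)"
  proof -
    let ?A = "Aset N j (q*q')"
    have "card (?A \<union> U2 \<union> U3 \<union> U4 \<union> U5) \<le> card ?A + card U2 + card U3 + card U4 + card U5"
      using card_Un_le[of "?A \<union> U2 \<union> U3 \<union> U4" U5] card_Un_le[of "?A \<union> U2 \<union> U3" U4]
        card_Un_le[of "?A \<union> U2" U3] card_Un_le[of ?A U2] by linarith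
    then have "real (card (?A \<union> U2 \<union> U3 \<union> U4 \<union> U5)) \<le> real (card ?A + card U2 + card U3 + card U4 + card U5)"
      by (simp only: of_nat_le_iff)
    then show ?thesis by simp
  qed
  also have "\<dots> \<le> c / (real q * real q') + c * H / (real q * real q') + c * H / (real q * real q')
       + c * H / (real q * real q') + c * H^2 / (real q * real q')"
  proof -
    have t1: "real (card (Aset N j (q*q'))) \<le> c / (real q * real q')" using IH2 q q' by blast
    have t2: "real (card U2) \<le> c * H / (real q * real q')"
    proof -
      have "real (card U2) \<le> (\<Sum>p'\<in>Pr N q'. real (card (Aset N j (q*p'))))"
        unfolding U2_def by (rule card_UN_real) auto
      also have "\<dots> \<le> (\<Sum>p'\<in>Pr N q'. (c / real q) * (1 / real p'))"
        by (rule sum_mono) (use IH2 Pr_prime q in auto)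
      also have "\<dots> = (c / real q) * (\<Sum>p'\<in>Pr N q'. 1 / real p')" by (simp add: sum_distrib_left)
      also have "\<dots> \<le> (c / real q) * (H / real q')"
        using sum_Pr[of q' N] q'pos c0 qpos H_def by (intro mult_left_mono) auto
      finally show ?thesis by simp
    qed
    have t3: "real (card U3) \<le> c * H / (real q * real q')"
    proof -
      have "real (card U3) \<le> (\<Sum>p\<in>Pr N q. real (card (Aset N j (p*q'))))"
        unfolding U3_def by (rule card_UN_real) auto
      also have "\<dots> \<le> (\<Sum>p\<in>Pr N q. (c / real q') * (1 / real p))"
      proof (rule sum_mono)
        fix p assume "p \<in> Pr N q"
        then have "real (card (Aset N j (p*q'))) \<le> c / (real p * real q')" using IH2 Pr_prime q' by blast
        then show "real (card (Aset N j (p*q'))) \<le> (c / real q') * (1 / real p)" by (simp add: mult.commute)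
      qed
      also have "\<dots> = (c / real q') * (\<Sum>p\<in>Pr N q. 1 / real p)" by (simp add: sum_distrib_left)
      also have "\<dots> \<le> (c / real q') * (H / real q)"
        using sum_Pr[of q N] q'pos c0 qpos H_def by (intro mult_left_mono) auto
      finally show ?thesis by (simp add: mult.commute)
    qed
    have t4: "real (card U4) \<le> c * H / (real q * real q')"
    proof -
      have "real (card U4) \<le> (\<Sum>p\<in>Pr N (q*q'). real (card (Aset N j p)))"
        unfolding U4_def by (rule card_UN_real) auto
      also have "\<dots> \<le> (\<Sum>p\<in>Pr N (q*q'). c * (1 / real p))"
        by (rule sum_mono) (use IH1 Pr_prime in auto)
      also have "\<dots> = c * (\<Sum>p\<in>Pr N (q*q'). 1 / real p)" by (simp add: sum_distrib_left)
      also have "\<dots> \<le> c * (H / real (q*q'))"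
      proof -
        have "q*q' \<ge> 1" using q q' prime_gt_0_nat by (simp add: Suc_le_eq)
        then show ?thesis using sum_Pr[of "q*q'" N] c0 H_def by (intro mult_left_mono) auto
      qed
      finally show ?thesis by simp
    qed
    have t5: "real (card U5) \<le> c * H^2 / (real q * real q')"
    proof -
      have "real (card U5) \<le> (\<Sum>pp\<in>Pr N q \<times> Pr N q'. real (card ((\<lambda>(p,p'). Aset N j (p*p')) pp)))"
        unfolding U5_def by (rule card_UN_real) auto
      also have "\<dots> \<le> (\<Sum>pp\<in>Pr N q \<times> Pr N q'. c * ((\<lambda>(p,p'). (1 / real p) * (1 / real p')) pp))"
        by (rule sum_mono) (use IH2 Pr_prime in auto)
      also have "\<dots> = c * (\<Sum>pp\<in>Pr N q \<times> Pr N q'. (\<lambda>(p,p'). (1 / real p) * (1 / real p')) pp)"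
        by (simp add: sum_distrib_left)
      finally have a: "real (card U5) \<le> c * (\<Sum>pp\<in>Pr N q \<times> Pr N q'. (\<lambda>(p,p'). (1 / real p) * (1 / real p')) pp)" .
      have b: "(\<Sum>pp\<in>Pr N q \<times> Pr N q'. (\<lambda>(p,p'). (1 / real p) * (1 / real p')) pp)
          = (\<Sum>p\<in>Pr N q. 1 / real p) * (\<Sum>p'\<in>Pr N q'. 1 / real p')"
        by (simp add: sum_product sum.cartesian_product)
      have cc: "(\<Sum>p\<in>Pr N q. 1 / real p) * (\<Sum>p'\<in>Pr N q'. 1 / real p') \<le> (H / real q) * (H / real q')"
        using sum_Pr[of q N] sum_Pr[of q' N] q'pos qpos H_def H1
        by (intro mult_mono) (auto intro: sum_nonneg)
      have a': "real (card U5) \<le> c * ((\<Sum>p\<in>Pr N q. 1 / real p) * (\<Sum>p'\<in>Pr N q'. 1 / real p'))"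
        using a b by simp
      have "real (card U5) \<le> c * ((H / real q) * (H / real q'))"
        using order_trans[OF a' mult_left_mono[OF cc c0]] .
      then show ?thesis by (simp add: power2_eq_square)
    qed
    show ?thesis using t1 t2 t3 t4 t5 by linarith
  qed
  also have "\<dots> = (1 + 3 * H + H^2) * c / (real q * real q')"
  proof -
    have "real q * real q' > 0" using qpos q'pos by simp
    then show ?thesis by (simp add: field_simps, simp add: add_divide_distrib)
  qed
  also have "\<dots> \<le> 5 * H^2 * c / (real q * real q')"
  proof -
    have "H * 1 \<le> H * H" using H1 by (intro mult_left_mono) auto
    then have "1 + 3 * H + H*H \<le> 5 * (H*H)" using H1 by linarith
    then have "1 + 3 * H + H^2 \<le> 5 * H^2" by (simp add: power2_eq_square)
    then have "(1 + 3 * H + H^2) * c \<le> 5 * H^2 * c" using c0 by (intro mult_right_mono) auto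
    then show ?thesis using qpos q'pos by (intro divide_right_mono) auto
  qed
  finally show ?thesis using H_def by simp
qed

lemma count_bound:
  fixes N :: nat assumes N1: "N \<ge> 1"
  shows "(\<forall>q. prime q \<longrightarrow> real (card (Aset N j q)) \<le> 5^j * Hn N^(2*j) * real N / real q) \<and>
    (\<forall>q q'. prime q \<longrightarrow> prime q' \<longrightarrow>
       real (card (Aset N j (q*q'))) \<le> 5^j * Hn N^(2*j) * real N / (real q * real q'))"
proof (induction j)
  case 0
  have A0: "Aset N 0 d = {n\<in>{1..N}. d dvd n}" for d unfolding Aset_def by simp
  show ?case
  proof (intro conjI allI impI)
    fix q :: nat assume "prime q"
    then have "q \<ge> 1" using prime_gt_0_nat by (simp add: Suc_le_eq)
    then show "real (card (Aset N 0 q)) \<le> 5^0 * Hn N^(2*0) * real N / real q"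
      using base_count A0 by simp
  next
    fix q q' :: nat assume "prime q" "prime q'"
    then have "q*q' \<ge> 1" using prime_gt_0_nat by (simp add: Suc_le_eq)
    then show "real (card (Aset N 0 (q*q'))) \<le> 5^0 * Hn N^(2*0) * real N / (real q * real q')"
      using base_count[of "q*q'" N] A0 by simp
  qed
next
  case (Suc j)
  define c where "c = 5^j * Hn N^(2*j) * real N"
  have H0: "Hn N \<ge> 0" using Hn_ge1[OF N1] by simp
  have c0: "c \<ge> 0" unfolding c_def using H0 by simp
  have e: "5^Suc j * Hn N^(2*Suc j) * real N = 5 * Hn N^2 * c"
    unfolding c_def by (simp add: power_add mult_ac power2_eq_square)
  have IH1: "\<forall>q. prime q \<longrightarrow> real (card (Aset N j q)) \<le> c / real q" using Suc c_def by simp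
  have IH2: "\<forall>q q'. prime q \<longrightarrow> prime q' \<longrightarrow> real (card (Aset N j (q*q'))) \<le> c / (real q * real q')"
    using Suc c_def by simp
  show ?case
  proof (intro conjI allI impI)
    fix q :: nat assume "prime q"
    then show "real (card (Aset N (Suc j) q)) \<le> 5^Suc j * Hn N^(2*Suc j) * real N / real q"
      unfolding e using step_prime[OF N1 c0 IH1 IH2] by blast
  next
    fix q q' :: nat assume "prime q" "prime q'"
    then show "real (card (Aset N (Suc j) (q*q'))) \<le> 5^Suc j * Hn N^(2*Suc j) * real N / (real q * real q')"
      unfolding e using step_pair[OF N1 c0 IH1 IH2] by blast
  qed
qed

lemma Hn_le_ln: "N \<ge> 1 \<Longrightarrow> Hn N \<le> 1 + ln (real N)"
proof (induction N rule: dec_induct)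
  case base then show ?case unfolding Hn_def by simp
next
  case (step N)
  have "Hn (Suc N) = Hn N + 1 / real (Suc N)" unfolding Hn_def by simp
  moreover have "1 / real (Suc N) \<le> ln (real (Suc N)) - ln (real N)"
  proof -
    have pos: "real N > 0" "real (Suc N) > 0" using step by auto
    have "ln (real N / real (Suc N)) \<le> real N / real (Suc N) - 1"
      using pos by (intro ln_le_minus_one) simp
    moreover have "ln (real N / real (Suc N)) = ln (real N) - ln (real (Suc N))"
      using pos by (simp add: ln_div)
    moreover have "real N / real (Suc N) - 1 = - (1 / real (Suc N))"
      using pos by (simp add: field_simps)
    ultimately show ?thesis by linarith
  qed
  ultimately show ?case using step by linarith
qed

lemma ln_ge_half: "x \<ge> (2::real) \<Longrightarrow> ln x \<ge> 1/2"
proof -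
  assume x: "x \<ge> 2"
  have "ln (1/x) \<le> 1/x - 1" using x by (intro ln_le_minus_one) simp
  moreover have "ln (1/x) = - ln x" using x by (simp add: ln_div)
  moreover have "1/x \<le> 1/2" using x by (simp add: divide_simps)
  ultimately show ?thesis by linarith
qed

theorem proposition1:
  fixes k :: nat
  shows "\<exists>C. \<forall>x y :: real. 2 \<le> y \<and> y \<le> x \<longrightarrow>
           \<bar>real (Phi_count k x y) - real (Psi_count x (P_set x y k))\<bar>
             \<le> C * x * (ln x) ^ (2 * k) / y"
proof (intro exI[of _ "real k * 45^k"] allI impI)
  fix x y :: real assume xy: "2 \<le> y \<and> y \<le> x"
  define N where "N = nat \<lfloor>x\<rfloor>"
  have Nx: "real N \<le> x" unfolding N_def using xy by simp
  have mem: "(1 \<le> n \<and> real n \<le> x) \<longleftrightarrow> n \<in> {1..N}" for n :: nat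
  proof
    assume "1 \<le> n \<and> real n \<le> x" then show "n \<in> {1..N}" unfolding N_def by (auto simp: le_nat_floor)
  next
    assume "n \<in> {1..N}"
    then have "real n \<le> real N" "1 \<le> n" by auto
    then show "1 \<le> n \<and> real n \<le> x" using Nx by linarith
  qed
  have N1: "N \<ge> 1" using mem[of 1] xy by auto
  define PhiS where "PhiS = {n::nat. 1 \<le> n \<and> real n \<le> x \<and>
      (\<forall>p. prime p \<and> p dvd iter_totient k n \<longrightarrow> real p \<le> y)}"
  define PsiS where "PsiS = {n::nat. 1 \<le> n \<and> real n \<le> x \<and>
      (\<forall>p. prime p \<and> p dvd n \<longrightarrow> p \<in> P_set x y k)}"
  have phi: "Phi_count k x y = card PhiS" unfolding Phi_count_def PhiS_def ..
  have psi: "Psi_count x (P_set x y k) = card PsiS" unfolding Psi_count_def PsiS_def ..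
  have sub: "PhiS \<subseteq> PsiS" unfolding PhiS_def PsiS_def using part_a by blast
  have finPsi: "finite PsiS"
  proof (rule finite_subset)
    show "PsiS \<subseteq> {1..N}" unfolding PsiS_def using mem by blast
  qed simp
  have "card PsiS = card PhiS + card (PsiS - PhiS)"
    using card_Diff_subset[OF finite_subset[OF sub finPsi] sub] card_mono[OF finPsi sub] by simp
  then have diff_eq: "\<bar>real (Phi_count k x y) - real (Psi_count x (P_set x y k))\<bar> = real (card (PsiS - PhiS))"
    unfolding phi psi by simp
  define Qs where "Qs = {q\<in>{1..N}. prime q \<and> y < real q}"
  have finQ: "finite Qs" unfolding Qs_def by simp
  have sub2: "PsiS - PhiS \<subseteq> (\<Union>i\<in>{..<k}. \<Union>q\<in>Qs. Aset N i (q*q))"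
  proof
    fix n assume n: "n \<in> PsiS - PhiS"
    then have n1: "1 \<le> n" "real n \<le> x" "\<forall>p. prime p \<and> p dvd n \<longrightarrow> p \<in> P_set x y k"
      "\<not> (\<forall>p. prime p \<and> p dvd iter_totient k n \<longrightarrow> real p \<le> y)"
      unfolding PsiS_def PhiS_def by auto
    then have "\<not> (\<forall>i<k. \<forall>q. prime q \<and> q*q dvd iter_totient i n \<longrightarrow> real q \<le> y)"
      using part_b[of y x n k] xy by blast
    then obtain i q where iq: "i < k" "prime q" "q*q dvd iter_totient i n" "\<not> real q \<le> y" by blast
    have nN: "n \<in> {1..N}" using mem n1 by blast
    have "q*q \<le> N" using dvd_iter_le(1)[OF nN iq(3)] .
    moreover have "q \<le> q*q" using prime_gt_0_nat[OF iq(2)] by simp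
    ultimately have "q \<le> N" by linarith
    then have "q \<in> Qs" unfolding Qs_def using iq prime_gt_0_nat[of q] by (auto simp: Suc_le_eq)
    then show "n \<in> (\<Union>i\<in>{..<k}. \<Union>q\<in>Qs. Aset N i (q*q))"
      using mem_Aset_dvd[OF nN iq(3)] iq(1) by blast
  qed
  define H where "H = Hn N"
  have H1: "H \<ge> 1" using Hn_ge1[OF N1] H_def by simp
  have y0: "y > 0" using xy by simp
  define M where "M = 5^k * H^(2*k) * real N / y"
  have inner: "(\<Sum>q\<in>Qs. real (card (Aset N i (q*q)))) \<le> M" if "i < k" for i
  proof -
    define D where "D = 5^i * H^(2*i) * real N"
    have D0: "D \<ge> 0" unfolding D_def using H1 by simp
    have "(\<Sum>q\<in>Qs. real (card (Aset N i (q*q)))) \<le> (\<Sum>q\<in>Qs. (D / y) * (1 / real q))"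
    proof (rule sum_mono)
      fix q assume q: "q \<in> Qs"
      then have qp: "prime q" "y < real q" unfolding Qs_def by auto
      have "real (card (Aset N i (q*q))) \<le> D / (real q * real q)"
        using count_bound[OF N1, of i] qp(1) unfolding D_def H_def by blast
      also have "\<dots> \<le> D / (y * real q)"
        using qp y0 D0 by (intro divide_left_mono mult_right_mono mult_pos_pos) auto
      also have "\<dots> = (D / y) * (1 / real q)" by simp
      finally show "real (card (Aset N i (q*q))) \<le> (D / y) * (1 / real q)" .
    qed
    also have "\<dots> = (D / y) * (\<Sum>q\<in>Qs. 1 / real q)" by (simp add: sum_distrib_left)
    also have "\<dots> \<le> (D / y) * H"
    proof (rule mult_left_mono)
      show "(\<Sum>q\<in>Qs. 1 / real q) \<le> H" unfolding H_def Hn_def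
        by (rule sum_mono2) (auto simp: Qs_def)
      show "D / y \<ge> 0" using D0 y0 by simp
    qed
    also have "\<dots> = 5^i * H^(2*i+1) * real N / y" unfolding D_def by (simp add: mult_ac)
    also have "\<dots> \<le> M" unfolding M_def
    proof (intro divide_right_mono mult_right_mono mult_mono)
      show "(5::real)^i \<le> 5^k" using that by (intro power_increasing) auto
      show "H^(2*i+1) \<le> H^(2*k)" using that H1 by (intro power_increasing) auto
    qed (use H1 y0 in auto)
    finally show ?thesis .
  qed
  have "real (card (PsiS - PhiS)) \<le> real (card (\<Union>i\<in>{..<k}. \<Union>q\<in>Qs. Aset N i (q*q)))"
    using card_mono[OF _ sub2] finQ by simp
  also have "\<dots> \<le> (\<Sum>i\<in>{..<k}. real (card (\<Union>q\<in>Qs. Aset N i (q*q))))"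
    by (rule card_UN_real) (auto simp: finQ)
  also have "\<dots> \<le> (\<Sum>i\<in>{..<k}. (\<Sum>q\<in>Qs. real (card (Aset N i (q*q)))))"
    by (rule sum_mono) (rule card_UN_real, auto simp: finQ)
  also have "\<dots> \<le> (\<Sum>i\<in>{..<k}. M)"
    by (rule sum_mono) (use inner in auto)
  also have "\<dots> = real k * M" by simp
  also have "\<dots> \<le> real k * 45^k * x * (ln x)^(2*k) / y"
  proof -
    have lnx: "ln x \<ge> 1/2" using ln_ge_half xy by simp
    have "H \<le> 1 + ln (real N)" using Hn_le_ln[OF N1] H_def by simp
    also have "ln (real N) \<le> ln x" using N1 Nx by simp
    finally have "H \<le> 3 * ln x" using lnx by linarith
    then have "H^(2*k) \<le> (3 * ln x)^(2*k)" using H1 by (intro power_mono) auto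
    also have "\<dots> = 9^k * (ln x)^(2*k)" by (simp add: power_mult_distrib power_mult)
    finally have Hb: "H^(2*k) \<le> 9^k * (ln x)^(2*k)" .
    have "5^k * H^(2*k) * real N \<le> 5^k * (9^k * (ln x)^(2*k)) * x"
      using Hb Nx H1 lnx by (intro mult_mono mult_left_mono) auto
    also have "\<dots> = 45^k * x * (ln x)^(2*k)" by (simp add: power_mult_distrib[symmetric] mult_ac)
    finally have "M \<le> 45^k * x * (ln x)^(2*k) / y" unfolding M_def using y0 by (intro divide_right_mono) auto
    then have "real k * M \<le> real k * (45^k * x * (ln x)^(2*k) / y)" by (intro mult_left_mono) auto
    then show ?thesis by (simp add: mult_ac)
  qed
  finally show "\<bar>real (Phi_count k x y) - real (Psi_count x (P_set x y k))\<bar>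
             \<le> real k * 45^k * x * (ln x) ^ (2 * k) / y" using diff_eq by simp
qed

end
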